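(* Assume (V1), (V2), and (In). Then for every $n\in\mathbb{N}$ and all $s,t\ge0$, $$d_{L,1}(\hat\rho^n(t),\hat\rho^n(s))\le 2L\max\{|v_{\max}|,|v(R)|,v_{\max}-v(R)\}\,|t-s|.$$
   Context: (V1): $v\in C^1([0,\infty))$ strictly decreasing; (V2): $v(0)=v_{\max}\in\mathbb{R}$. $\mathcal{M}_L$: nonnegative compactly supported Radon measures on $\mathbb{R}$ of mass $L>0$. (In): $\bar\rho\in\mathcal{M}_L\cap L^\infty(\mathbb{R})$; $R:=\|\bar\rho\|_{L^\infty}$; $\bar x_{\min}:=\min\mathrm{supp}\,\bar\rho$. For $n\in\mathbb{N}$: $N_n=2^n$, $\ell_n=2^{-n}L$, $\bar x^n_0=\bar x_{\min}$, $\bar x^n_i=\sup\{x:\int_{\bar x^n_{i-1}}^x\bar\rho<\ell_n\}$; $(x^n_i(t))$ solves $\dot x^n_{N_n}=v_{\max}$, $\dot x^n_i=v(\ell_n/(x^n_{i+1}-x^n_i))$, $x^n_i(0)=\bar x^n_i$; $y^n_i:=\ell_n/(x^n_{i+1}-x^n_i)$; $\hat\rho^n(t,x):=\sum_{i=0}^{N_n-1}y^n_i(t)\chi_{[x^n_i(t),x^n_{i+1}(t))}(x)$. For $\mu\in\mathcal{M}_L$, $F_\mu(x):=\mu((-\infty,x])$ and $d_{L,1}(\mu,\nu):=\|F_\mu-F_\nu\|_{L^1(\mathbb{R})}$, which equals the $L^1([0,L])$ distance of the pseudo-inverses $z\mapsto\inf\{x:F_\mu(x)>z\}$. *)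

theory Defs
  imports "HOL-Analysis.Analysis" "HOL-Probability.Essential_Supremum"
begin

definition dens_meas :: "(real \<Rightarrow> real) \<Rightarrow> real measure" where
  "dens_meas rho = density lborel (\<lambda>x. ennreal (rho x))"

definition msupp :: "real measure \<Rightarrow> real set" where
  "msupp M = {x. \<forall>e>0. 0 < emeasure M {x - e<..<x + e}}"

definition Linf_norm :: "(real \<Rightarrow> real) \<Rightarrow> real" where
  "Linf_norm rho = real_of_ereal (esssup lborel (\<lambda>x. ereal \<bar>rho x\<bar>))"

primrec xbar :: "(real \<Rightarrow> real) \<Rightarrow> real \<Rightarrow> nat \<Rightarrow> nat \<Rightarrow> real" where
  "xbar rho L n 0 = Inf (msupp (dens_meas rho))"
| "xbar rho L n (Suc i) =
     Sup {y. measure (dens_meas rho) {xbar rho L n i..y} < L / 2 ^ n}"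

definition rhohat :: "real \<Rightarrow> nat \<Rightarrow> (nat \<Rightarrow> real \<Rightarrow> real) \<Rightarrow> real \<Rightarrow> real \<Rightarrow> real" where
  "rhohat L n x t y =
     (\<Sum>i<2 ^ n. (L / 2 ^ n) / (x (Suc i) t - x i t) * indicator {x i t..<x (Suc i) t} y)"

definition cdf :: "real measure \<Rightarrow> real \<Rightarrow> real" where
  "cdf M x = measure M {..x}"

definition dL1 :: "real measure \<Rightarrow> real measure \<Rightarrow> ennreal" where
  "dL1 M N = (\<integral>\<^sup>+ x. ennreal \<bar>cdf M x - cdf N x\<bar> \<partial>lborel)"

end

theory Submission
  imports Defs
begin


definition ramp :: "real \<Rightarrow> real \<Rightarrow> real \<Rightarrow> real" where
  "ramp a b y = (if y < a then 0 else if b \<le> y then 1 else (y - a) / (b - a))"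

lemma ramp_mono_b:
  assumes "a < b" "b \<le> b2"
  shows "0 \<le> ramp a b y - ramp a b2 y"
    "ramp a b y - ramp a b2 y \<le> (b2 - b) / (b2 - a) * indicator {a..b2} y"
proof -
  have "0 \<le> ramp a b y - ramp a b2 y \<and> ramp a b y - ramp a b2 y \<le> (b2 - b) / (b2 - a) * indicator {a..b2} y"
  proof (cases "y < a")
    case True then show ?thesis by (simp add: ramp_def)
  next
    case False
    show ?thesis
    proof (cases "b \<le> y")
      case True
      show ?thesis
      proof (cases "b2 \<le> y")
        case True then show ?thesis using False assms by (simp add: ramp_def indicator_def)
      next
        case F2: False
        have "1 - (y - a) / (b2 - a) = (b2 - y) / (b2 - a)" using assms by (simp add: field_simps)
        moreover have "(b2 - y) / (b2 - a) \<le> (b2 - b) / (b2 - a)" using True assms by (intro divide_right_mono) auto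
        moreover have "(y - a) / (b2 - a) \<le> 1" using F2 assms by simp
        ultimately show ?thesis using False True F2 assms by (simp add: ramp_def indicator_def)
      qed
    next
      case F3: False
      have e: "(y - a) / (b - a) - (y - a) / (b2 - a) = (y - a) * (b2 - b) / ((b - a) * (b2 - a))"
        using assms by (simp add: field_simps)
      have "(y - a) * (b2 - b) / ((b - a) * (b2 - a)) \<le> (b - a) * (b2 - b) / ((b - a) * (b2 - a))"
        using assms False F3 by (intro divide_right_mono mult_right_mono) auto
      also have "\<dots> = (b2 - b) / (b2 - a)" using assms by simp
      finally have "(y - a) / (b - a) - (y - a) / (b2 - a) \<le> (b2 - b) / (b2 - a)" using e by simp
      moreover have "0 \<le> (y - a) * (b2 - b) / ((b - a) * (b2 - a))" using assms False by simp
      ultimately show ?thesis using False F3 assms e by (simp add: ramp_def indicator_def)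
    qed
  qed
  then show "0 \<le> ramp a b y - ramp a b2 y"
    "ramp a b y - ramp a b2 y \<le> (b2 - b) / (b2 - a) * indicator {a..b2} y" by auto
qed

lemma ramp_mono_a:
  assumes "a \<le> a2" "a2 < b"
  shows "0 \<le> ramp a b y - ramp a2 b y"
    "ramp a b y - ramp a2 b y \<le> (a2 - a) / (b - a) * indicator {a..b} y"
proof -
  have "0 \<le> ramp a b y - ramp a2 b y \<and> ramp a b y - ramp a2 b y \<le> (a2 - a) / (b - a) * indicator {a..b} y"
  proof (cases "y < a")
    case True then show ?thesis using assms by (simp add: ramp_def)
  next
    case False
    show ?thesis
    proof (cases "b \<le> y")
      case True then show ?thesis using False assms by (simp add: ramp_def indicator_def)
    next
      case F3: False
      show ?thesis
      proof (cases "y < a2")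
        case True
        have "(y - a) / (b - a) \<le> (a2 - a) / (b - a)" using True assms by (intro divide_right_mono) auto
        then show ?thesis using False F3 True assms by (simp add: ramp_def indicator_def)
      next
        case F4: False
        have e: "(y - a) / (b - a) - (y - a2) / (b - a2) = (b - y) * (a2 - a) / ((b - a) * (b - a2))"
          using assms by (simp add: field_simps)
        have "(b - y) * (a2 - a) / ((b - a) * (b - a2)) \<le> (b - a2) * (a2 - a) / ((b - a) * (b - a2))"
          using assms F4 F3 by (intro divide_right_mono mult_right_mono) auto
        also have "\<dots> = (a2 - a) / (b - a)" using assms by simp
        finally have "(y - a) / (b - a) - (y - a2) / (b - a2) \<le> (a2 - a) / (b - a)" using e by simp
        moreover have "0 \<le> (b - y) * (a2 - a) / ((b - a) * (b - a2))" using assms F3 by simp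
        ultimately show ?thesis using False F3 F4 assms e by (simp add: ramp_def indicator_def)
      qed
    qed
  qed
  then show "0 \<le> ramp a b y - ramp a2 b y"
    "ramp a b y - ramp a2 b y \<le> (a2 - a) / (b - a) * indicator {a..b} y" by auto
qed

lemma ramp_mono_ab:
  assumes "am \<le> a" "a < b" "am < bm" "bm \<le> b"
  shows "0 \<le> ramp am bm y - ramp a b y"
    "ramp am bm y - ramp a b y \<le> ((b - bm) + (a - am)) / (b - am) * indicator {am..b} y"
proof -
  note 1 = ramp_mono_b[of am bm b y] and 2 = ramp_mono_a[of am a b y]
  have "((b - bm) + (a - am)) / (b - am) = (b - bm) / (b - am) + (a - am) / (b - am)"
    by (simp add: add_divide_distrib)
  then show "0 \<le> ramp am bm y - ramp a b y"
    "ramp am bm y - ramp a b y \<le> ((b - bm) + (a - am)) / (b - am) * indicator {am..b} y"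
    using 1 2 assms by (auto simp: algebra_simps)
qed

lemma ramp_L1:
  assumes "a < b" "a' < b'"
  shows "(\<integral>\<^sup>+ y. ennreal \<bar>ramp a b y - ramp a' b' y\<bar> \<partial>lborel) \<le> ennreal (\<bar>a - a'\<bar> + \<bar>b - b'\<bar>)"
proof -
  define am where "am = min a a'"
  define bm where "bm = min b b'"
  define c1 where "c1 = ((b - bm) + (a - am)) / (b - am)"
  define c2 where "c2 = ((b' - bm) + (a' - am)) / (b' - am)"
  have h1: "am \<le> a" "am < bm" "bm \<le> b" "am \<le> a'" "bm \<le> b'" using assms by (auto simp: am_def bm_def)
  have c1: "c1 \<ge> 0" "c2 \<ge> 0" using h1 assms by (auto simp: c1_def c2_def)
  have pw: "\<bar>ramp a b y - ramp a' b' y\<bar> \<le> c1 * indicator {am..b} y + c2 * indicator {am..b'} y" for y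
    using ramp_mono_ab[of am a b bm y] ramp_mono_ab[of am a' b' bm y] h1 assms
    unfolding c1_def c2_def by linarith
  have "(\<integral>\<^sup>+ y. ennreal \<bar>ramp a b y - ramp a' b' y\<bar> \<partial>lborel)
     \<le> (\<integral>\<^sup>+ y. ennreal c1 * indicator {am..b} y + ennreal c2 * indicator {am..b'} y \<partial>lborel)"
  proof (rule nn_integral_mono)
    fix y
    have "ennreal \<bar>ramp a b y - ramp a' b' y\<bar> \<le> ennreal (c1 * indicator {am..b} y + c2 * indicator {am..b'} y)"
      using pw by (rule ennreal_leI)
    also have "\<dots> = ennreal c1 * indicator {am..b} y + ennreal c2 * indicator {am..b'} y"
      using c1 by (auto simp: indicator_def ennreal_plus)
    finally show "ennreal \<bar>ramp a b y - ramp a' b' y\<bar> \<le> ennreal c1 * indicator {am..b} y + ennreal c2 * indicator {am..b'} y" .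
  qed
  also have "\<dots> = ennreal c1 * ennreal (b - am) + ennreal c2 * ennreal (b' - am)"
    using h1 assms by (subst nn_integral_add) (auto simp: nn_integral_cmult_indicator)
  also have "\<dots> = ennreal (c1 * (b - am) + c2 * (b' - am))"
    using c1 h1 assms by (simp add: ennreal_mult ennreal_plus)
  also have "c1 * (b - am) + c2 * (b' - am) = \<bar>a - a'\<bar> + \<bar>b - b'\<bar>"
    using h1 assms by (simp add: c1_def c2_def am_def bm_def)
  finally show ?thesis .
qed




lemma emeasure_Ico_Iic:
  assumes "a < b"
  shows "emeasure lborel ({a..<b} \<inter> {..z}) = ennreal ((b - a) * ramp a b z)"
proof -
  consider "z < a" | "b \<le> z" | "a \<le> z" "z < b" by linarith
  then show ?thesis
  proof cases
    case 1
    then have "{a..<b} \<inter> {..z} = {}" by auto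
    then show ?thesis using 1 by (simp add: ramp_def)
  next
    case 2
    then have "{a..<b} \<inter> {..z} = {a..<b}" by auto
    then show ?thesis using 2 assms by (simp add: ramp_def)
  next
    case 3
    then have "{a..<b} \<inter> {..z} = {a..z}" by auto
    then show ?thesis using 3 assms by (simp add: ramp_def)
  qed
qed

lemma cdf_pw:
  fixes p :: "nat \<Rightarrow> real" and N :: nat and l :: real
  assumes ord: "\<forall>i<N. p i < p (Suc i)" and l: "l \<ge> 0"
  shows "cdf (dens_meas (\<lambda>y. \<Sum>i<N. l / (p (Suc i) - p i) * indicator {p i..<p (Suc i)} y)) z
       = (\<Sum>i<N. l * ramp (p i) (p (Suc i)) z)"
proof -
  have nn: "\<And>i y. i < N \<Longrightarrow> 0 \<le> l / (p (Suc i) - p i) * indicator {p i..<p (Suc i)} y"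
    using ord l by auto
  have r01: "\<And>i. 0 \<le> ramp (p i) (p (Suc i)) z"
    unfolding ramp_def by auto
  have "emeasure (dens_meas (\<lambda>y. \<Sum>i<N. l / (p (Suc i) - p i) * indicator {p i..<p (Suc i)} y)) {..z}
     = (\<integral>\<^sup>+ y. ennreal (\<Sum>i<N. l / (p (Suc i) - p i) * indicator {p i..<p (Suc i)} y) * indicator {..z} y \<partial>lborel)"
    unfolding dens_meas_def by (subst emeasure_density) auto
  also have "\<dots> = (\<integral>\<^sup>+ y. (\<Sum>i<N. ennreal (l / (p (Suc i) - p i)) * indicator ({p i..<p (Suc i)} \<inter> {..z}) y) \<partial>lborel)"
  proof (rule nn_integral_cong)
    fix y
    have "ennreal (\<Sum>i<N. l / (p (Suc i) - p i) * indicator {p i..<p (Suc i)} y)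
        = (\<Sum>i<N. ennreal (l / (p (Suc i) - p i) * indicator {p i..<p (Suc i)} y))"
      using nn by (subst sum_ennreal[symmetric]) auto
    note eq = this
    show "ennreal (\<Sum>i<N. l / (p (Suc i) - p i) * indicator {p i..<p (Suc i)} y) * indicator {..z} y
       = (\<Sum>i<N. ennreal (l / (p (Suc i) - p i)) * indicator ({p i..<p (Suc i)} \<inter> {..z}) y)"
      unfolding eq sum_distrib_right by (intro sum.cong refl) (auto simp: indicator_def)
  qed
  also have "\<dots> = (\<Sum>i<N. ennreal (l / (p (Suc i) - p i)) * emeasure lborel ({p i..<p (Suc i)} \<inter> {..z}))"
    by (subst nn_integral_sum) (auto simp: nn_integral_cmult_indicator)
  also have "\<dots> = (\<Sum>i<N. ennreal (l * ramp (p i) (p (Suc i)) z))"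
  proof (rule sum.cong[OF refl])
    fix i assume "i \<in> {..<N}"
    then have o: "p i < p (Suc i)" using ord by auto
    have "ennreal (l / (p (Suc i) - p i)) * ennreal ((p (Suc i) - p i) * ramp (p i) (p (Suc i)) z)
        = ennreal (l / (p (Suc i) - p i) * ((p (Suc i) - p i) * ramp (p i) (p (Suc i)) z))"
      using o l r01[of i] by (subst ennreal_mult[symmetric]) auto
    also have "\<dots> = ennreal (l * ramp (p i) (p (Suc i)) z)" using o by simp
    finally show "ennreal (l / (p (Suc i) - p i)) * emeasure lborel ({p i..<p (Suc i)} \<inter> {..z}) = ennreal (l * ramp (p i) (p (Suc i)) z)"
      using emeasure_Ico_Iic[OF o] by simp
  qed
  also have "\<dots> = ennreal (\<Sum>i<N. l * ramp (p i) (p (Suc i)) z)"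
    using l r01 by (subst sum_ennreal[symmetric]) auto
  finally show ?thesis
    unfolding cdf_def measure_def using l r01 by (simp add: sum_nonneg)
qed




lemma ramp_meas[measurable]: "ramp a b \<in> borel_measurable borel"
  unfolding ramp_def by measurable

lemma dL1_pw:
  fixes p q :: "nat \<Rightarrow> real" and N :: nat and l :: real
  assumes op: "\<forall>i<N. p i < p (Suc i)" and oq: "\<forall>i<N. q i < q (Suc i)" and l: "l \<ge> 0"
  shows "dL1 (dens_meas (\<lambda>y. \<Sum>i<N. l / (p (Suc i) - p i) * indicator {p i..<p (Suc i)} y))
             (dens_meas (\<lambda>y. \<Sum>i<N. l / (q (Suc i) - q i) * indicator {q i..<q (Suc i)} y))
       \<le> ennreal (\<Sum>i<N. l * (\<bar>p i - q i\<bar> + \<bar>p (Suc i) - q (Suc i)\<bar>))"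
proof -
  have "dL1 (dens_meas (\<lambda>y. \<Sum>i<N. l / (p (Suc i) - p i) * indicator {p i..<p (Suc i)} y))
             (dens_meas (\<lambda>y. \<Sum>i<N. l / (q (Suc i) - q i) * indicator {q i..<q (Suc i)} y))
     = (\<integral>\<^sup>+ z. ennreal \<bar>(\<Sum>i<N. l * ramp (p i) (p (Suc i)) z) - (\<Sum>i<N. l * ramp (q i) (q (Suc i)) z)\<bar> \<partial>lborel)"
    unfolding dL1_def cdf_pw[OF op l] cdf_pw[OF oq l] ..
  also have "\<dots> \<le> (\<integral>\<^sup>+ z. (\<Sum>i<N. ennreal l * ennreal \<bar>ramp (p i) (p (Suc i)) z - ramp (q i) (q (Suc i)) z\<bar>) \<partial>lborel)"
  proof (rule nn_integral_mono)
    fix z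
    have "\<bar>(\<Sum>i<N. l * ramp (p i) (p (Suc i)) z) - (\<Sum>i<N. l * ramp (q i) (q (Suc i)) z)\<bar>
        = \<bar>\<Sum>i<N. l * (ramp (p i) (p (Suc i)) z - ramp (q i) (q (Suc i)) z)\<bar>"
      by (simp add: sum_subtractf right_diff_distrib)
    also have "\<dots> \<le> (\<Sum>i<N. \<bar>l * (ramp (p i) (p (Suc i)) z - ramp (q i) (q (Suc i)) z)\<bar>)"
      by (rule sum_abs)
    also have "\<dots> = (\<Sum>i<N. l * \<bar>ramp (p i) (p (Suc i)) z - ramp (q i) (q (Suc i)) z\<bar>)"
      using l by (simp add: abs_mult)
    finally have "ennreal \<bar>(\<Sum>i<N. l * ramp (p i) (p (Suc i)) z) - (\<Sum>i<N. l * ramp (q i) (q (Suc i)) z)\<bar>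
       \<le> ennreal (\<Sum>i<N. l * \<bar>ramp (p i) (p (Suc i)) z - ramp (q i) (q (Suc i)) z\<bar>)"
      by (rule ennreal_leI)
    also have "\<dots> = (\<Sum>i<N. ennreal l * ennreal \<bar>ramp (p i) (p (Suc i)) z - ramp (q i) (q (Suc i)) z\<bar>)"
      using l by (subst sum_ennreal[symmetric]) (auto simp: ennreal_mult)
    finally show "ennreal \<bar>(\<Sum>i<N. l * ramp (p i) (p (Suc i)) z) - (\<Sum>i<N. l * ramp (q i) (q (Suc i)) z)\<bar>
       \<le> (\<Sum>i<N. ennreal l * ennreal \<bar>ramp (p i) (p (Suc i)) z - ramp (q i) (q (Suc i)) z\<bar>)" .
  qed
  also have "\<dots> = (\<Sum>i<N. ennreal l * (\<integral>\<^sup>+ z. ennreal \<bar>ramp (p i) (p (Suc i)) z - ramp (q i) (q (Suc i)) z\<bar> \<partial>lborel))"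
    by (subst nn_integral_sum) (auto intro!: sum.cong nn_integral_cmult)
  also have "\<dots> \<le> (\<Sum>i<N. ennreal l * ennreal (\<bar>p i - q i\<bar> + \<bar>p (Suc i) - q (Suc i)\<bar>))"
    using op oq by (intro sum_mono mult_left_mono ramp_L1) auto
  also have "\<dots> = ennreal (\<Sum>i<N. l * (\<bar>p i - q i\<bar> + \<bar>p (Suc i) - q (Suc i)\<bar>))"
    using l by (subst sum_ennreal[symmetric]) (auto simp: ennreal_mult)
  finally show ?thesis .
qed




lemma exk: fixes y c :: real assumes "0 < e" shows "\<exists>k::nat. e \<le> real k \<and> 1 / real (Suc k) \<le> e"
proof -
  obtain k1 :: nat where "e \<le> real k1" using real_arch_simple by blast
  obtain k2 :: nat where k2: "0 < k2" "inverse (real k2) < e" using assms ex_inverse_of_nat_less by blast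
  define k where "k = max k1 k2"
  have "1 / real (Suc k) \<le> 1 / real k2" unfolding k_def using k2(1) by (intro divide_left_mono) auto
  also have "\<dots> < e" using k2 by (simp add: divide_inverse)
  moreover have "e \<le> real k" unfolding k_def using \<open>e \<le> real k1\<close> by linarith
  ultimately show ?thesis by (intro exI[of _ k]) auto
qed

lemma Linf_AE:
  assumes meas: "rho0 \<in> borel_measurable lborel"
    and fin: "esssup lborel (\<lambda>y. ereal \<bar>rho0 y\<bar>) < \<infinity>"
  shows "AE y in lborel. \<bar>rho0 y\<bar> \<le> Linf_norm rho0"
proof -
  let ?e = "esssup lborel (\<lambda>y. ereal \<bar>rho0 y\<bar>)"
  have ae: "AE y in lborel. ereal \<bar>rho0 y\<bar> \<le> ?e" by (rule esssup_AE)
  have "?e \<noteq> - \<infinity>"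
  proof
    assume m: "?e = - \<infinity>"
    have "AE (y::real) in lborel. False" using ae by (rule eventually_mono) (simp add: m)
    then have "ae_filter (lborel::real measure) = bot" by (simp add: eventually_False)
    then show False by (simp add: ae_filter_eq_bot_iff)
  qed
  then obtain r where r: "?e = ereal r" using fin by (cases ?e) auto
  then have "Linf_norm rho0 = r" unfolding Linf_norm_def by simp
  then show ?thesis using ae r by simp
qed

lemma msupp_null_compact:
  fixes M :: "real measure"
  assumes sM: "sets M = sets borel" and K: "compact K" and dis: "K \<inter> msupp M = {}"
  shows "K \<in> null_sets M"
proof -
  let ?T = "{U. open U \<and> U \<in> null_sets M}"
  have cov: "K \<subseteq> \<Union>?T"
  proof
    fix z assume "z \<in> K"
    then have "z \<notin> msupp M" using dis by auto
    then obtain e where e: "e > 0" "\<not> 0 < emeasure M {z - e<..<z + e}" unfolding msupp_def by auto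
    then have "{z - e<..<z + e} \<in> null_sets M" using sM by (auto simp: null_sets_def)
    then show "z \<in> \<Union>?T" using e by (intro UnionI[of "{z - e<..<z + e}"]) auto
  qed
  obtain T' where T': "T' \<subseteq> ?T" "finite T'" "K \<subseteq> \<Union>T'"
    using compactE[OF K cov] by auto
  have "\<Union>T' \<in> null_sets M" using T' by (intro null_sets.finite_Union) auto
  moreover have "K \<in> sets M" using sM K by (simp add: compact_imp_closed)
  ultimately show ?thesis using T' null_sets_subset by blast
qed




lemma init_spacing:
  fixes rho0 :: "real \<Rightarrow> real" and L :: real and n :: nat
  assumes L_pos: "L > 0"
    and rho0_meas: "rho0 \<in> borel_measurable lborel"
    and rho0_mass: "emeasure (dens_meas rho0) UNIV = ennreal L"
    and rho0_cpt: "bounded (msupp (dens_meas rho0))"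
    and rho0_Linf: "esssup lborel (\<lambda>y. ereal \<bar>rho0 y\<bar>) < \<infinity>"
  shows "Linf_norm rho0 > 0 \<and>
         (\<forall>i<2^n. (L / 2^n) / Linf_norm rho0 \<le> xbar rho0 L n (Suc i) - xbar rho0 L n i)"
proof -
  define M where "M = dens_meas rho0"
  define R where "R = Linf_norm rho0"
  define l where "l = L / 2^n"
  define N :: nat where "N = 2^n"
  define H where "H y = measure M {..y}" for y
  have l_pos: "l > 0" using L_pos unfolding l_def by simp
  have NL: "real N * l = L" unfolding N_def l_def by simp
  have sM: "sets M = sets borel" unfolding M_def dens_meas_def by simp
  have spM: "space M = UNIV" unfolding M_def dens_meas_def by simp
  have aeR: "AE y in lborel. \<bar>rho0 y\<bar> \<le> R" unfolding R_def by (rule Linf_AE[OF rho0_meas rho0_Linf])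
  interpret M: finite_measure M
    by (rule finite_measureI) (use rho0_mass spM in \<open>auto simp: M_def\<close>)
  have massL: "measure M UNIV = L" using rho0_mass L_pos unfolding M_def
    by (simp add: measure_def)
  have meas_sets[simp]: "A \<in> sets M" if "A \<in> sets borel" for A using that sM by simp
  have ebound: "emeasure M {a..b} \<le> ennreal (R * (b - a))" if "a \<le> b" for a b
  proof -
    have "emeasure M {a..b} = (\<integral>\<^sup>+ y. ennreal (rho0 y) * indicator {a..b} y \<partial>lborel)"
      unfolding M_def dens_meas_def using rho0_meas by (subst emeasure_density) auto
    also have "\<dots> \<le> (\<integral>\<^sup>+ y. ennreal R * indicator {a..b} y \<partial>lborel)"
      by (rule nn_integral_mono_AE) (use aeR in \<open>auto elim!: eventually_mono simp: indicator_def intro!: ennreal_leI\<close>)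
    also have "\<dots> = ennreal R * ennreal (b - a)" using that by (simp add: nn_integral_cmult_indicator)
    also have "\<dots> \<le> ennreal (R * (b - a))"
      by (cases "R \<ge> 0") (use that in \<open>auto simp: ennreal_mult ennreal_neg\<close>)
    finally show ?thesis .
  qed
  have R_nn: "R \<ge> 0"
  proof (rule ccontr)
    assume "\<not> R \<ge> 0"
    then have "AE (y::real) in lborel. False" using aeR by (rule_tac eventually_mono[OF aeR]) auto
    then have "ae_filter (lborel::real measure) = bot" by (simp add: eventually_False)
    then show False by (simp add: ae_filter_eq_bot_iff)
  qed
  have mbound: "measure M {a..b} \<le> R * (b - a)" if "a \<le> b" for a b
  proof -
    have "ennreal (measure M {a..b}) \<le> ennreal (R * (b - a))"
      using ebound[OF that] by (simp add: M.emeasure_eq_measure)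
    then show ?thesis using R_nn that by (simp add: ennreal_le_iff)
  qed
  have pt0: "measure M {a..a} = 0" for a using mbound[of a a] by (simp add: measure_nonneg antisym)
  have Hdiff: "measure M {a..b} = H b - H a" if "a \<le> b" for a b
  proof -
    have "{..b} = {..<a} \<union> {a..b}" using that by auto
    then have 1: "H b = measure M {..<a} + measure M {a..b}" unfolding H_def
      by (simp only:) (rule M.finite_measure_Union, auto)
    have "{..a} = {..<a} \<union> {a..a}" by auto
    then have 2: "H a = measure M {..<a} + measure M {a..a}" unfolding H_def
      by (simp only:) (rule M.finite_measure_Union, auto)
    show ?thesis using 1 2 pt0[of a] by simp
  qed
  have Hlip: "H b - H a \<le> R * (b - a)" "H a \<le> H b" if "a \<le> b" for a b
    using Hdiff[OF that] mbound[OF that] measure_nonneg[of M "{a..b}"] by auto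
  obtain B where B: "\<forall>z\<in>msupp M. \<bar>z\<bar> \<le> B" using rho0_cpt unfolding M_def bounded_real by auto
  have nullI: "K \<in> null_sets M" if "compact K" "K \<inter> msupp M = {}" for K
    by (rule msupp_null_compact[OF sM that])
  have null0: "measure M A = 0" if "A \<in> null_sets M" for A
    using that by (simp add: measure_def null_setsD1)
  have Sne: "msupp M \<noteq> {}"
  proof
    assume e: "msupp M = {}"
    have "(\<Union>k::nat. {-real k..real k}) \<in> null_sets M" using e by (intro null_sets_UN nullI) auto
    moreover have "(\<Union>k::nat. {-real k..real k}) = UNIV"
    proof -
      have "y \<in> (\<Union>k::nat. {-real k..real k})" for y :: real
      proof -
        obtain k :: nat where "\<bar>y\<bar> \<le> real k" using real_arch_simple by blast
        then show ?thesis by (intro UN_I[of k]) auto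
      qed
      then show ?thesis by auto
    qed
    ultimately have "measure M UNIV = 0" using null0 by simp
    then show False using massL L_pos by simp
  qed
  have bddS: "bdd_below (msupp M)" using B by (intro bdd_belowI[of _ "-B"]) auto
  define x0 where "x0 = Inf (msupp M)"
  have x0_xbar: "xbar rho0 L n 0 = x0" unfolding x0_def M_def by simp
  have left_null: "{..<x0} \<in> null_sets M"
  proof (rule null_sets_subset)
    show "(\<Union>k::nat. {x0 - real k..x0 - 1 / real (Suc k)}) \<in> null_sets M"
    proof (intro null_sets_UN nullI)
      fix k :: nat
      show "compact {x0 - real k..x0 - 1 / real (Suc k)}" by simp
      show "{x0 - real k..x0 - 1 / real (Suc k)} \<inter> msupp M = {}"
      proof (rule ccontr)
        assume "{x0 - real k..x0 - 1 / real (Suc k)} \<inter> msupp M \<noteq> {}"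
        then obtain z where z: "z \<in> msupp M" "z \<le> x0 - 1 / real (Suc k)" by auto
        have "x0 \<le> z" unfolding x0_def using z(1) bddS by (rule cInf_lower)
        moreover have "1 / real (Suc k) > 0" by simp
        ultimately show False using z(2) by linarith
      qed
    qed
    show "{..<x0} \<subseteq> (\<Union>k::nat. {x0 - real k..x0 - 1 / real (Suc k)})"
    proof
      fix y assume "y \<in> {..<x0}"
      then obtain k :: nat where "x0 - y \<le> real k" "1 / real (Suc k) \<le> x0 - y" using exk[of "x0 - y"] by auto
      then show "y \<in> (\<Union>k::nat. {x0 - real k..x0 - 1 / real (Suc k)})" by (intro UN_I[of k]) auto
    qed
  qed simp
  have right_null: "{B<..} \<in> null_sets M"
  proof (rule null_sets_subset)
    show "(\<Union>k::nat. {B + 1 / real (Suc k)..B + real k}) \<in> null_sets M"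
    proof (intro null_sets_UN nullI)
      fix k :: nat
      show "compact {B + 1 / real (Suc k)..B + real k}" by simp
      show "{B + 1 / real (Suc k)..B + real k} \<inter> msupp M = {}"
      proof (rule ccontr)
        assume "{B + 1 / real (Suc k)..B + real k} \<inter> msupp M \<noteq> {}"
        then obtain z where z: "z \<in> msupp M" "B + 1 / real (Suc k) \<le> z" by auto
        have "z \<le> B" using B z(1) by auto
        moreover have "1 / real (Suc k) > 0" by simp
        ultimately show False using z(2) by linarith
      qed
    qed
    show "{B<..} \<subseteq> (\<Union>k::nat. {B + 1 / real (Suc k)..B + real k})"
    proof
      fix y assume "y \<in> {B<..}"
      then obtain k :: nat where "y - B \<le> real k" "1 / real (Suc k) \<le> y - B" using exk[of "y - B"] by auto
      then show "y \<in> (\<Union>k::nat. {B + 1 / real (Suc k)..B + real k})" by (intro UN_I[of k]) auto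
    qed
  qed simp
  have H0: "H x0 = 0"
  proof -
    have "{..x0} = {..<x0} \<union> {x0..x0}" by auto
    then have "H x0 = measure M {..<x0} + measure M {x0..x0}" unfolding H_def
      by (simp only:) (rule M.finite_measure_Union, auto)
    then show ?thesis using null0[OF left_null] pt0[of x0] by simp
  qed
  have HB: "H y = L" if "B \<le> y" for y
  proof -
    have "measure M ({..y} \<union> {y<..}) = H y + measure M {y<..}" unfolding H_def
      by (rule M.finite_measure_Union) auto
    moreover have "{..y} \<union> {y<..} = UNIV" by auto
    ultimately have "measure M UNIV = H y + measure M {y<..}" by simp
    moreover have "{y<..} \<in> null_sets M" using that by (intro null_sets_subset[OF right_null]) auto
    ultimately show ?thesis using null0 massL by simp
  qed
  have step: "H (xbar rho0 L n (Suc i)) = real (Suc i) * l \<and> l \<le> R * (xbar rho0 L n (Suc i) - xbar rho0 L n i)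
      \<and> xbar rho0 L n i \<le> xbar rho0 L n (Suc i)"
    if i: "i < N" and Hi: "H (xbar rho0 L n i) = real i * l" for i
  proof -
    define a where "a = xbar rho0 L n i"
    define S where "S = {y. measure M {a..y} < l}"
    define c where "c = xbar rho0 L n (Suc i)"
    have cS: "c = Sup S" unfolding c_def S_def a_def M_def l_def by simp
    have Ha: "H a = real i * l" using Hi a_def by simp
    have mem: "y \<in> S \<longleftrightarrow> (y < a \<or> (a \<le> y \<and> H y - real i * l < l))" for y
    proof (cases "y < a")
      case True then show ?thesis using l_pos unfolding S_def by simp
    next
      case False then show ?thesis using Hdiff[of a y] Ha unfolding S_def by simp
    qed
    have il: "real (Suc i) * l \<le> L" using i NL l_pos
      by (metis Suc_leI mult_right_mono of_nat_le_iff order_less_imp_le)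
    have bdd: "bdd_above S"
    proof (rule bdd_aboveI[of _ "max a B"])
      fix y assume "y \<in> S"
      show "y \<le> max a B"
      proof (rule ccontr)
        assume "\<not> y \<le> max a B"
        then have "a \<le> y" "B \<le> y" by auto
        then have "H y = L" using HB by simp
        then show False using \<open>y \<in> S\<close> mem[of y] \<open>a \<le> y\<close> il by (auto simp: algebra_simps)
      qed
    qed
    have aS: "a \<in> S" using mem[of a] Ha l_pos by simp
    have ac: "a \<le> c" unfolding cS using aS bdd by (rule cSup_upper)
    have up: "H c \<ge> real (Suc i) * l"
    proof (rule ccontr)
      assume "\<not> H c \<ge> real (Suc i) * l"
      define \<eta> where "\<eta> = (real (Suc i) * l - H c) / (2 * (R + 1))"
      have \<eta>: "\<eta> > 0" unfolding \<eta>_def using \<open>\<not> H c \<ge> real (Suc i) * l\<close> R_nn by auto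
      have "R * \<eta> \<le> (R + 1) * \<eta>" using \<eta> by (simp add: algebra_simps)
      also have "\<dots> = (real (Suc i) * l - H c) / 2" unfolding \<eta>_def using R_nn by (simp add: field_simps)
      finally have R\<eta>: "R * \<eta> \<le> (real (Suc i) * l - H c) / 2" .
      have "H (c + \<eta>) - H c \<le> R * \<eta>" using Hlip(1)[of c "c + \<eta>"] \<eta> by simp
      then have "H (c + \<eta>) - real i * l < l" using R\<eta> \<open>\<not> H c \<ge> real (Suc i) * l\<close>
        by (simp add: algebra_simps)
      then have "c + \<eta> \<in> S" using mem[of "c + \<eta>"] ac \<eta> by auto
      then have "c + \<eta> \<le> c" unfolding cS using bdd by (rule cSup_upper)
      then show False using \<eta> by simp
    qed
    have lo: "H c \<le> real (Suc i) * l"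
    proof (rule ccontr)
      assume A: "\<not> H c \<le> real (Suc i) * l"
      define \<eta> where "\<eta> = (H c - real (Suc i) * l) / (2 * (R + 1))"
      have \<eta>: "\<eta> > 0" unfolding \<eta>_def using A R_nn by auto
      have "R * \<eta> \<le> (R + 1) * \<eta>" using \<eta> by (simp add: algebra_simps)
      also have "\<dots> = (H c - real (Suc i) * l) / 2" unfolding \<eta>_def using R_nn by (simp add: field_simps)
      finally have R\<eta>: "R * \<eta> \<le> (H c - real (Suc i) * l) / 2" .
      have "c - \<eta> < Sup S" using \<eta> cS by simp
      then obtain y where y: "y \<in> S" "c - \<eta> < y" using less_cSup_iff[of S "c - \<eta>"] aS bdd by blast
      have yc: "y \<le> c" unfolding cS using y(1) bdd by (rule cSup_upper)
      have "H c - H y \<le> R * (c - y)" using Hlip(1)[OF yc] .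
      also have "\<dots> \<le> R * \<eta>" using y(2) R_nn by (intro mult_left_mono) auto
      finally have Hy: "H y > real (Suc i) * l" using R\<eta> A by (simp add: field_simps)
      show False
      proof (cases "y < a")
        case True
        then have "H y \<le> H a" using Hlip(2)[of y a] by simp
        then show False using Hy Ha l_pos by (simp add: algebra_simps)
      next
        case False
        then show False using mem[of y] y(1) Hy by (simp add: algebra_simps)
      qed
    qed
    have Hc: "H c = real (Suc i) * l" using up lo by simp
    have "l = H c - H a" using Hc Ha by (simp add: algebra_simps)
    also have "\<dots> \<le> R * (c - a)" using Hlip(1)[OF ac] .
    finally show ?thesis using Hc ac unfolding a_def c_def by simp
  qed
  have Hall: "H (xbar rho0 L n i) = real i * l" if "i \<le> N" for i
    using that
  proof (induction i)
    case 0 then show ?case using H0 x0_xbar by simp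
  next
    case (Suc i) then show ?case using step[of i] by simp
  qed
  have sp: "l \<le> R * (xbar rho0 L n (Suc i) - xbar rho0 L n i)" "xbar rho0 L n i \<le> xbar rho0 L n (Suc i)"
    if "i < N" for i
    using step[OF that Hall[of i]] that by auto
  have Npos: "0 < N" unfolding N_def by simp
  have Rpos: "R > 0"
  proof (rule ccontr)
    assume "\<not> R > 0" then have "R = 0" using R_nn by simp
    then show False using sp(1)[OF Npos] l_pos by simp
  qed
  have "l / R \<le> xbar rho0 L n (Suc i) - xbar rho0 L n i" if "i < N" for i
    using sp(1)[OF that] Rpos by (simp add: field_simps mult.commute)
  then show ?thesis using Rpos unfolding R_def l_def N_def by auto
qed



lemma barrier:
  fixes x :: "nat \<Rightarrow> real \<Rightarrow> real" and v :: "real \<Rightarrow> real"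
  assumes vmono: "\<forall>a b. 0 \<le> a \<longrightarrow> a \<le> b \<longrightarrow> v b \<le> v a"
    and l: "l \<ge> 0"
    and der_last: "\<forall>\<tau>\<ge>0. (x N has_real_derivative v 0) (at \<tau> within {0..})"
    and der: "\<forall>i<N. \<forall>\<tau>\<ge>0. (x i has_real_derivative v (l / (x (Suc i) \<tau> - x i \<tau>))) (at \<tau> within {0..})"
    and init: "\<forall>i<N. \<delta> \<le> x (Suc i) 0 - x i 0"
    and eps: "\<epsilon> > 0" "T \<ge> 0" "\<epsilon> * (1 + T) < \<delta>"
  shows "\<forall>\<tau>\<in>{0..T}. \<forall>i<N. \<delta> - \<epsilon> * (1 + \<tau>) < x (Suc i) \<tau> - x i \<tau>"
proof (rule ccontr)
  define vel where "vel i \<tau> = (if i < N then v (l / (x (Suc i) \<tau> - x i \<tau>)) else v 0)" for i \<tau>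
  have derall: "(x i has_real_derivative vel i \<tau>) (at \<tau> within {0..})" if "i \<le> N" "\<tau> \<ge> 0" for i \<tau>
    using that der der_last unfolding vel_def by (cases "i < N") auto
  define d where "d i \<tau> = x (Suc i) \<tau> - x i \<tau>" for i \<tau>
  define b where "b \<tau> = \<delta> - \<epsilon> * (1 + \<tau>)" for \<tau>
  have dder: "(d i has_real_derivative (vel (Suc i) \<tau> - vel i \<tau> + 0)) (at \<tau> within {0..})"
    if "i < N" "\<tau> \<ge> 0" for i \<tau>
    unfolding d_def using derall[of "Suc i" \<tau>] derall[of i \<tau>] that
    by (auto intro!: derivative_eq_intros)
  have dcont: "continuous_on {0..T} (d i)" if "i < N" for i
  proof -
    have "continuous (at \<tau> within {0..}) (d i)" if "\<tau> \<in> {0..T}" for \<tau>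
      using dder[of i \<tau>] \<open>i < N\<close> that by (auto intro: DERIV_continuous)
    then show ?thesis
      unfolding continuous_on_eq_continuous_within
      by (metis atLeastAtMost_iff atLeast_iff continuous_within_subset subsetI)
  qed
  have bcont: "continuous_on {0..T} b" unfolding b_def by (intro continuous_intros)
  assume "\<not> (\<forall>\<tau>\<in>{0..T}. \<forall>i<N. \<delta> - \<epsilon> * (1 + \<tau>) < x (Suc i) \<tau> - x i \<tau>)"
  then obtain \<tau>0 i0 where t0: "\<tau>0 \<in> {0..T}" "i0 < N" "d i0 \<tau>0 \<le> b \<tau>0"
    unfolding d_def b_def by force
  define S where "S = (\<Union>i<N. {\<tau> \<in> {0..T}. d i \<tau> \<le> b \<tau>})"
  have Sne: "S \<noteq> {}" using t0 unfolding S_def by blast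
  have Scl: "closed S" unfolding S_def
    by (intro closed_UN finite_lessThan ballI continuous_on_closed_Collect_le dcont bcont) auto
  have Sbd: "bdd_below S" unfolding S_def by (auto intro!: bdd_belowI[of _ 0])
  define ts where "ts = Inf S"
  have tsS: "ts \<in> S" unfolding ts_def by (rule closed_contains_Inf[OF Sne Sbd Scl])
  have notS: "\<tau> \<notin> S" if "\<tau> < ts" for \<tau>
    using that unfolding ts_def by (meson Sbd cInf_lower not_le)
  have ts01: "ts \<in> {0..T}" using tsS unfolding S_def by auto
  have bpos: "b \<tau> > 0" if "\<tau> \<in> {0..T}" for \<tau>
  proof -
    have "\<epsilon> * (1 + \<tau>) \<le> \<epsilon> * (1 + T)" using that eps by (intro mult_left_mono) auto
    then show ?thesis using eps unfolding b_def by linarith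
  qed
  have Nne: "N > 0" using t0 by auto
  define m where "m = Min ((\<lambda>j. d j ts) ` {..<N})"
  have "m \<in> (\<lambda>j. d j ts) ` {..<N}" unfolding m_def using Nne by (intro Min_in) auto
  then obtain i where i: "i < N" "d i ts = m" by auto
  have mmin: "m \<le> d j ts" if "j < N" for j unfolding m_def using that by (intro Min_le) auto
  from tsS obtain k where k: "k < N" "d k ts \<le> b ts" unfolding S_def by auto
  have dile: "d i ts \<le> b ts" using mmin[OF k(1)] k i by simp
  have ts_pos: "ts > 0"
  proof (rule ccontr)
    assume "\<not> ts > 0" then have "ts = 0" using ts01 by auto
    then have "d k 0 \<le> \<delta> - \<epsilon>" using k unfolding b_def by simp
    moreover have "\<delta> \<le> d k 0" using init k unfolding d_def by auto
    ultimately show False using eps by linarith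
  qed
  have dieq: "d i ts = b ts"
  proof (rule ccontr)
    assume "d i ts \<noteq> b ts"
    then have lt: "b ts - d i ts > 0" using dile by auto
    have gc: "continuous_on {0..T} (\<lambda>\<tau>. b \<tau> - d i \<tau>)"
      by (intro continuous_intros bcont dcont i)
    from gc ts01 lt obtain r where r: "r > 0"
      "\<forall>\<tau>'\<in>{0..T}. dist \<tau>' ts < r \<longrightarrow> dist (b \<tau>' - d i \<tau>') (b ts - d i ts) < b ts - d i ts"
      unfolding continuous_on_iff by blast
    define \<tau>' where "\<tau>' = ts - min (r/2) (ts/2)"
    have "\<tau>' \<in> {0..T}" "dist \<tau>' ts < r" "\<tau>' < ts" using ts01 r ts_pos unfolding \<tau>'_def
      by (auto simp: dist_real_def)
    then have "dist (b \<tau>' - d i \<tau>') (b ts - d i ts) < b ts - d i ts" using r by auto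
    then have "d i \<tau>' \<le> b \<tau>'" by (auto simp: dist_real_def)
    then have "\<tau>' \<in> S" using \<open>\<tau>' \<in> {0..T}\<close> i unfolding S_def by auto
    with notS[OF \<open>\<tau>' < ts\<close>] show False by simp
  qed
  have dipos: "d i ts > 0" using dieq bpos[OF ts01] by simp
  have vel_ge: "vel (Suc i) ts \<ge> vel i ts"
  proof (cases "Suc i < N")
    case True
    have "d i ts \<le> d (Suc i) ts" using mmin[OF True] i by simp
    then have "l / d (Suc i) ts \<le> l / d i ts" using dipos l by (intro divide_left_mono) auto
    moreover have "0 \<le> l / d (Suc i) ts" using dipos \<open>d i ts \<le> d (Suc i) ts\<close> l by auto
    ultimately show ?thesis using vmono True i unfolding vel_def d_def by auto
  next
    case False
    have "0 \<le> l / d i ts" using dipos l by auto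
    then show ?thesis using vmono False i unfolding vel_def d_def by auto
  qed
  have gder: "((\<lambda>\<tau>. d i \<tau> - b \<tau>) has_real_derivative (vel (Suc i) ts - vel i ts + 0 + \<epsilon>)) (at ts)"
  proof -
    have "((\<lambda>\<tau>. d i \<tau> - b \<tau>) has_real_derivative (vel (Suc i) ts - vel i ts + 0 - (0 - \<epsilon> * (0 + 1)))) (at ts within {0..})"
      unfolding b_def using dder[OF i(1), of ts] ts01 by (auto intro!: derivative_eq_intros)
    then have "((\<lambda>\<tau>. d i \<tau> - b \<tau>) has_real_derivative (vel (Suc i) ts - vel i ts + 0 + \<epsilon>)) (at ts within {0<..})"
      by (rule DERIV_subset[where t="{0<..}", THEN DERIV_cong]) auto
    then show ?thesis using at_within_open[of ts "{0<..}"] ts_pos by auto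
  qed
  have "vel (Suc i) ts - vel i ts + 0 + \<epsilon> > 0" using vel_ge eps by auto
  from DERIV_pos_inc_left[OF gder this] obtain r where r: "r > 0"
    "\<forall>h>0. h < r \<longrightarrow> d i (ts - h) - b (ts - h) < d i ts - b ts" by blast
  define h where "h = min (r/2) (ts/2)"
  have h: "h > 0" "h < r" "ts - h \<in> {0..T}" "ts - h < ts" using r ts_pos ts01 unfolding h_def by auto
  then have "d i (ts - h) < b (ts - h)" using r dieq by force
  then have "ts - h \<in> S" using h i unfolding S_def by force
  with notS[OF h(4)] show False by simp
qed


lemma spacing:
  fixes x :: "nat \<Rightarrow> real \<Rightarrow> real" and v :: "real \<Rightarrow> real"
  assumes vmono: "\<forall>a b. 0 \<le> a \<longrightarrow> a \<le> b \<longrightarrow> v b \<le> v a"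
    and l: "l \<ge> 0"
    and der_last: "\<forall>\<tau>\<ge>0. (x N has_real_derivative v 0) (at \<tau> within {0..})"
    and der: "\<forall>i<N. \<forall>\<tau>\<ge>0. (x i has_real_derivative v (l / (x (Suc i) \<tau> - x i \<tau>))) (at \<tau> within {0..})"
    and init: "\<forall>i<N. \<delta> \<le> x (Suc i) 0 - x i 0"
    and \<delta>: "\<delta> > 0"
    and \<tau>: "\<tau> \<ge> 0" and i: "i < N"
  shows "\<delta> \<le> x (Suc i) \<tau> - x i \<tau>"
proof (rule ccontr)
  define d where "d = x (Suc i) \<tau> - x i \<tau>"
  assume "\<not> \<delta> \<le> x (Suc i) \<tau> - x i \<tau>"
  then have dl: "d < \<delta>" unfolding d_def by simp
  define \<epsilon> where "\<epsilon> = min ((\<delta> - d) / (2 * (1 + \<tau>))) (\<delta> / (2 * (1 + \<tau>)))"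
  have e0: "\<epsilon> > 0" unfolding \<epsilon>_def using dl \<delta> \<tau> by auto
  have e1: "\<epsilon> * (1 + \<tau>) \<le> (\<delta> - d) / 2"
  proof -
    have "\<epsilon> \<le> (\<delta> - d) / (2 * (1 + \<tau>))" unfolding \<epsilon>_def by simp
    then have "\<epsilon> * (1 + \<tau>) \<le> (\<delta> - d) / (2 * (1 + \<tau>)) * (1 + \<tau>)" using \<tau> by (intro mult_right_mono) auto
    moreover have "(\<delta> - d) / (2 * (1 + \<tau>)) * (1 + \<tau>) = (\<delta> - d) / 2" using \<tau> by (simp add: field_simps)
    ultimately show ?thesis by linarith
  qed
  have e2: "\<epsilon> * (1 + \<tau>) < \<delta>"
  proof -
    have "\<epsilon> \<le> \<delta> / (2 * (1 + \<tau>))" unfolding \<epsilon>_def by simp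
    then have "\<epsilon> * (1 + \<tau>) \<le> \<delta> / (2 * (1 + \<tau>)) * (1 + \<tau>)" using \<tau> by (intro mult_right_mono) auto
    moreover have "\<delta> / (2 * (1 + \<tau>)) * (1 + \<tau>) = \<delta> / 2" using \<tau> by (simp add: field_simps)
    ultimately show ?thesis using \<delta> by linarith
  qed
  have "\<forall>\<tau>'\<in>{0..\<tau>}. \<forall>i<N. \<delta> - \<epsilon> * (1 + \<tau>') < x (Suc i) \<tau>' - x i \<tau>'"
    by (rule barrier[OF vmono l der_last der init e0 \<tau> e2])
  then have "\<delta> - \<epsilon> * (1 + \<tau>) < d" using i \<tau> unfolding d_def by auto
  moreover have "\<delta> - (\<delta> - d) / 2 = (\<delta> + d) / 2" by (simp add: field_simps)
  ultimately have "(\<delta> + d) / 2 < d" using e1 by linarith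
  then show False using dl by simp
qed


lemma lipschitz_x:
  fixes x :: "nat \<Rightarrow> real \<Rightarrow> real" and v :: "real \<Rightarrow> real"
  assumes vmono: "\<forall>a b. 0 \<le> a \<longrightarrow> a \<le> b \<longrightarrow> v b \<le> v a"
    and l: "l > 0" and R: "R > 0"
    and der_last: "\<forall>\<tau>\<ge>0. (x N has_real_derivative v 0) (at \<tau> within {0..})"
    and der: "\<forall>i<N. \<forall>\<tau>\<ge>0. (x i has_real_derivative v (l / (x (Suc i) \<tau> - x i \<tau>))) (at \<tau> within {0..})"
    and sp: "\<forall>\<tau>\<ge>0. \<forall>i<N. l / R \<le> x (Suc i) \<tau> - x i \<tau>"
    and i: "i \<le> N" and s: "s \<ge> 0" and t: "t \<ge> 0"
  shows "\<bar>x i t - x i s\<bar> \<le> max \<bar>v 0\<bar> \<bar>v R\<bar> * \<bar>t - s\<bar>"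
proof -
  define vel where "vel \<tau> = (if i < N then v (l / (x (Suc i) \<tau> - x i \<tau>)) else v 0)" for \<tau>
  have d: "(x i has_field_derivative vel \<tau>) (at \<tau> within {0..})" if "\<tau> \<in> {0..}" for \<tau>
    using that der der_last i unfolding vel_def by (cases "i < N") auto
  have b: "norm (vel \<tau>) \<le> max \<bar>v 0\<bar> \<bar>v R\<bar>" if "\<tau> \<in> {0..}" for \<tau>
  proof (cases "i < N")
    case True
    define dd where "dd = x (Suc i) \<tau> - x i \<tau>"
    have dd: "l / R \<le> dd" using sp that True unfolding dd_def by auto
    have ddpos: "dd > 0" using dd l R by (smt (verit) divide_pos_pos)
    have "l / dd \<le> l / (l / R)" using dd l R ddpos by (intro divide_left_mono) auto
    then have y1: "l / dd \<le> R" using l by simp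
    have y0: "0 \<le> l / dd" using l ddpos by simp
    have "v R \<le> v (l / dd)" using vmono y0 y1 by auto
    moreover have "v (l / dd) \<le> v 0" using vmono y0 by auto
    ultimately show ?thesis using True unfolding vel_def dd_def by auto
  next
    case False then show ?thesis unfolding vel_def by auto
  qed
  have "norm (x i t - x i s) \<le> max \<bar>v 0\<bar> \<bar>v R\<bar> * norm (t - s)"
    by (rule field_differentiable_bound[of "{0..}" "x i" vel]) (use d b s t in auto)
  then show ?thesis by simp
qed


theorem proposition3p13:
  fixes v :: "real \<Rightarrow> real" and rho0 :: "real \<Rightarrow> real" and L :: real
    and n :: nat and x :: "nat \<Rightarrow> real \<Rightarrow> real" and s t :: real
  assumes V1_C1: "\<exists>v'. continuous_on {0..} v' \<and>
                      (\<forall>r\<ge>0. (v has_real_derivative v' r) (at r within {0..}))"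
    and V1_decr: "\<forall>a b. 0 \<le> a \<longrightarrow> a < b \<longrightarrow> v b < v a"
    and L_pos: "L > 0"
    and rho0_meas: "rho0 \<in> borel_measurable lborel"
    and rho0_nonneg: "AE y in lborel. 0 \<le> rho0 y"
    and rho0_mass: "emeasure (dens_meas rho0) UNIV = ennreal L"
    and rho0_cpt: "bounded (msupp (dens_meas rho0))"
    and rho0_Linf: "esssup lborel (\<lambda>y. ereal \<bar>rho0 y\<bar>) < \<infinity>"
    and init: "\<forall>i\<le>2 ^ n. x i 0 = xbar rho0 L n i"
    and ode_last: "\<forall>\<tau>\<ge>0. (x (2 ^ n) has_real_derivative v 0) (at \<tau> within {0..})"
    and ode: "\<forall>i<2 ^ n. \<forall>\<tau>\<ge>0. (x i has_real_derivative
                 v ((L / 2 ^ n) / (x (Suc i) \<tau> - x i \<tau>))) (at \<tau> within {0..})"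
    and s_nonneg: "s \<ge> 0" and t_nonneg: "t \<ge> 0"
  shows "dL1 (dens_meas (rhohat L n x t)) (dens_meas (rhohat L n x s))
           \<le> ennreal (2 * L * max (max \<bar>v 0\<bar> \<bar>v (Linf_norm rho0)\<bar>) (v 0 - v (Linf_norm rho0))
                      * \<bar>t - s\<bar>)"
proof -
  define l where "l = L / 2 ^ n"
  define R where "R = Linf_norm rho0"
  define Mv where "Mv = max \<bar>v 0\<bar> \<bar>v R\<bar>"
  have l_pos: "l > 0" using L_pos unfolding l_def by simp
  have isp: "R > 0 \<and> (\<forall>i<2^n. l / R \<le> xbar rho0 L n (Suc i) - xbar rho0 L n i)"
    using init_spacing[OF L_pos rho0_meas rho0_mass rho0_cpt rho0_Linf, of n] unfolding R_def l_def .
  have Rpos: "R > 0" using isp by simp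
  have vmono: "\<forall>a b. 0 \<le> a \<longrightarrow> a \<le> b \<longrightarrow> v b \<le> v a"
    using V1_decr by (metis order_le_less)
  have init': "\<forall>i<2^n. l / R \<le> x (Suc i) 0 - x i 0" using init isp by simp
  have ode': "\<forall>i<2 ^ n. \<forall>\<tau>\<ge>0. (x i has_real_derivative v (l / (x (Suc i) \<tau> - x i \<tau>))) (at \<tau> within {0..})"
    using ode unfolding l_def .
  have sp: "\<forall>\<tau>\<ge>0. \<forall>i<2^n. l / R \<le> x (Suc i) \<tau> - x i \<tau>"
    using spacing[OF vmono _ ode_last ode' init'] l_pos Rpos by auto
  have lip: "\<bar>x i t - x i s\<bar> \<le> Mv * \<bar>t - s\<bar>" if "i \<le> 2^n" for i
    unfolding Mv_def by (rule lipschitz_x[OF vmono l_pos Rpos ode_last ode' sp that s_nonneg t_nonneg])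
  have ord: "\<forall>i<2^n. x i \<tau> < x (Suc i) \<tau>" if "\<tau> \<ge> 0" for \<tau>
  proof (intro allI impI)
    fix i :: nat assume "i < 2^n"
    then have "l / R \<le> x (Suc i) \<tau> - x i \<tau>" using sp that by auto
    moreover have "l / R > 0" using l_pos Rpos by simp
    ultimately show "x i \<tau> < x (Suc i) \<tau>" by linarith
  qed
  have rh: "rhohat L n x \<tau> = (\<lambda>y. \<Sum>i<2^n. l / ((\<lambda>i. x i \<tau>) (Suc i) - (\<lambda>i. x i \<tau>) i)
                 * indicator {(\<lambda>i. x i \<tau>) i..<(\<lambda>i. x i \<tau>) (Suc i)} y)" for \<tau>
    by (simp add: fun_eq_iff rhohat_def l_def)
  have "dL1 (dens_meas (rhohat L n x t)) (dens_meas (rhohat L n x s))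
      \<le> ennreal (\<Sum>i<2^n. l * (\<bar>x i t - x i s\<bar> + \<bar>x (Suc i) t - x (Suc i) s\<bar>))"
    unfolding rh using dL1_pw[of "2^n" "\<lambda>i. x i t" "\<lambda>i. x i s" l] ord[OF t_nonneg] ord[OF s_nonneg] l_pos
    by simp
  also have "\<dots> \<le> ennreal (\<Sum>i<(2::nat)^n. l * (2 * Mv * \<bar>t - s\<bar>))"
  proof (intro ennreal_leI sum_mono mult_left_mono)
    fix i assume "i \<in> {..<(2::nat)^n}"
    then have "i \<le> 2^n" "Suc i \<le> 2^n" by auto
    then show "\<bar>x i t - x i s\<bar> + \<bar>x (Suc i) t - x (Suc i) s\<bar> \<le> 2 * Mv * \<bar>t - s\<bar>"
      using lip[of i] lip[of "Suc i"] by linarith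
  qed (use l_pos in auto)
  also have "(\<Sum>i<(2::nat)^n. l * (2 * Mv * \<bar>t - s\<bar>)) = 2 * L * Mv * \<bar>t - s\<bar>"
    unfolding l_def by simp
  also have "\<dots> \<le> 2 * L * max (max \<bar>v 0\<bar> \<bar>v (Linf_norm rho0)\<bar>) (v 0 - v (Linf_norm rho0)) * \<bar>t - s\<bar>"
    unfolding Mv_def R_def using L_pos by (intro mult_right_mono mult_left_mono) auto
  finally show ?thesis by (simp add: ennreal_leI)
qed

end
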